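(* For every $\varepsilon>0$ there exists $\eta>0$ such that the following holds for all $C\ge12/\varepsilon$. Every $(\varepsilon,C)$-rich graph $G$ on $\{0,1\}^d$ contains a fundamental interval $I$ (at some level $a<d$), a vertex $x\in\mathrm{lhs}(I)$, and a subgraph $G'$ of $G[\mathrm{rhs}(I)]$ such that $G'$ is $(\eta,\varepsilon C/24)$-rich and the larger vertex of every edge of $G'$ lies in $N^+(x)$.
   Context: For distinct $x,y\in\{0,1\}^d$, $\delta(x,y)=\min\{i:x_i\ne y_i\}$; $\{0,1\}^d$ is ordered lexicographically ($x<y$ iff $x_{\delta(x,y)}=0$). For a graph $G$ on $\{0,1\}^d$, a level-$\ell$ edge is an edge $uv$ with $\delta(u,v)=\ell$, $e_\ell(G)$ counts them, $\tau_{\ell,d}=2^{2d-\ell-1}$, a level $\ell\in[d]$ is $\alpha$-rich if $e_\ell(G)\ge\alpha\tau_{\ell,d}$, and $G$ is $(\alpha,C)$-rich if at least $C$ levels are $\alpha$-rich. For $a\in\{0,\dots,d\}$, the fundamental intervals at level $a$ are the classes of strings in $\{0,1\}^d$ agreeing in their first $a$ coordinates. For such an interval $I$ with $a<d$, $\mathrm{lhs}(I)$ (resp. $\mathrm{rhs}(I)$) is the set of strings of $I$ whose $(a+1)$-th coordinate is $0$ (resp. $1$). A graph on $\mathrm{rhs}(I)$ is regarded as a graph on $\{0,1\}^{d-a-1}$ by deleting the first $a+1$ (constant) coordinates, and richness of $G'$ is understood via this identification. $N^+(x)$ is the set of forward neighbours of $x$ in $G$, i.e. vertices $v>x$ with $xv\in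 E(G)$. *)

theory Defs
  imports Complex_Main
begin

text \<open>Binary strings in \<open>{0,1}^d\<close> are represented as \<open>bool list\<close>s of length d
  (False = 0, True = 1); the paper's coordinate i (1-based) is list index i - 1.\<close>

definition cube :: "nat \<Rightarrow> bool list set" where
  "cube d = {x. length x = d}"

definition delta :: "bool list \<Rightarrow> bool list \<Rightarrow> nat" where
  "delta x y = Suc (LEAST i. i < length x \<and> x ! i \<noteq> y ! i)"

definition lex_less :: "bool list \<Rightarrow> bool list \<Rightarrow> bool" where
  "lex_less x y \<longleftrightarrow> length x = length y \<and>
     (\<exists>i < length x. take i x = take i y \<and> \<not> x ! i \<and> y ! i)"

definition graph_on :: "nat \<Rightarrow> bool list set set \<Rightarrow> bool" where
  "graph_on d E \<longleftrightarrow> (\<forall>e\<in>E. \<exists>u v. e = {u, v} \<and> u \<noteq> v \<and> u \<in> cube d \<and> v \<in> cube d)"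

definition level_edges :: "bool list set set \<Rightarrow> nat \<Rightarrow> bool list set set" where
  "level_edges E l = {e \<in> E. \<exists>u v. e = {u, v} \<and> u \<noteq> v \<and> delta u v = l}"

definition e_level :: "bool list set set \<Rightarrow> nat \<Rightarrow> nat" where
  "e_level E l = card (level_edges E l)"

definition tau :: "nat \<Rightarrow> nat \<Rightarrow> real" where
  "tau l d = 2 ^ (2 * d - l - 1)"

definition rich_level :: "real \<Rightarrow> nat \<Rightarrow> bool list set set \<Rightarrow> nat \<Rightarrow> bool" where
  "rich_level \<alpha> d E l \<longleftrightarrow> real (e_level E l) \<ge> \<alpha> * tau l d"

definition rich :: "real \<Rightarrow> real \<Rightarrow> nat \<Rightarrow> bool list set set \<Rightarrow> bool" where
  "rich \<alpha> C d E \<longleftrightarrow> real (card {l \<in> {1..d}. rich_level \<alpha> d E l}) \<ge> C"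

definition fund_interval :: "nat \<Rightarrow> nat \<Rightarrow> bool list \<Rightarrow> bool list set" where
  "fund_interval d a p = {x \<in> cube d. take a x = p}"

definition lhs :: "nat \<Rightarrow> nat \<Rightarrow> bool list \<Rightarrow> bool list set" where
  "lhs d a p = {x \<in> fund_interval d a p. x ! a = False}"

definition rhs :: "nat \<Rightarrow> nat \<Rightarrow> bool list \<Rightarrow> bool list set" where
  "rhs d a p = {x \<in> fund_interval d a p. x ! a = True}"

definition fwd_nbrs :: "bool list set set \<Rightarrow> bool list \<Rightarrow> bool list set" where
  "fwd_nbrs E x = {v. lex_less x v \<and> {x, v} \<in> E}"

text \<open>Identification of a graph on rhs(I) with a graph on \<open>{0,1}^(d-a-1)\<close>:
  delete the first k = a+1 coordinates.\<close>
definition shift_graph :: "nat \<Rightarrow> bool list set set \<Rightarrow> bool list set set" where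
  "shift_graph k E = (\<lambda>e. drop k ` e) ` E"

end

theory Submission
  imports Defs
begin


definition lvl :: "bool list \<Rightarrow> bool list \<Rightarrow> nat \<Rightarrow> bool" where
  "lvl u v l \<longleftrightarrow> length u = length v \<and> 1 \<le> l \<and> l \<le> length v \<and>
     take (l-1) u = take (l-1) v \<and> \<not> u!(l-1) \<and> v!(l-1)"

lemma take_eq_nth: "take i u = take i v \<Longrightarrow> j < i \<Longrightarrow> j < length u \<Longrightarrow> j < length v \<Longrightarrow> u!j = v!j"
  by (metis nth_take)

lemma delta_eq:
  assumes "length u = length v" "i < length u" "take i u = take i v" "u!i \<noteq> v!i"
  shows "delta u v = Suc i"
proof -
  have "(LEAST j. j < length u \<and> u!j \<noteq> v!j) = i"
  proof (rule Least_equality)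
    show "i < length u \<and> u!i \<noteq> v!i" using assms by auto
    fix j assume "j < length u \<and> u!j \<noteq> v!j"
    then show "i \<le> j" using assms take_eq_nth[of i u v j] by (metis not_le)
  qed
  then show ?thesis unfolding delta_def by simp
qed

lemma exists_diff:
  assumes "length u = length v" "u \<noteq> v"
  shows "\<exists>i<length u. take i u = take i v \<and> u!i \<noteq> v!i"
proof -
  have ex: "\<exists>j. j < length u \<and> u!j \<noteq> v!j" using assms nth_equalityI by metis
  define i where "i = (LEAST j. j < length u \<and> u!j \<noteq> v!j)"
  have i1: "i < length u \<and> u!i \<noteq> v!i" unfolding i_def by (rule LeastI_ex[OF ex])
  have "\<And>j. j < i \<Longrightarrow> u!j = v!j"
  proof -
    fix j assume "j < i"
    then have "\<not> (j < length u \<and> u!j \<noteq> v!j)" unfolding i_def by (rule not_less_Least)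
    then show "u!j = v!j" using \<open>j < i\<close> i1 by simp
  qed
  then have "take i u = take i v"
    using i1 assms by (intro nth_equalityI) auto
  then show ?thesis using i1 by blast
qed

lemma lvl_imp: "lvl u v l \<Longrightarrow> lex_less u v \<and> delta u v = l"
proof -
  assume a: "lvl u v l"
  then have "l - 1 < length u" "take (l-1) u = take (l-1) v" "u!(l-1) \<noteq> v!(l-1)" "length u = length v"
    unfolding lvl_def by auto
  then have "delta u v = Suc (l-1)" using delta_eq[of u v "l-1"] by simp
  moreover have "lex_less u v" using a unfolding lvl_def lex_less_def
    by (intro conjI exI[of _ "l-1"]) auto
  ultimately show ?thesis using a unfolding lvl_def by auto
qed

lemma lex_imp: "lex_less u v \<Longrightarrow> lvl u v (delta u v)"
proof -
  assume "lex_less u v"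
  then obtain i where i: "length u = length v" "i < length u" "take i u = take i v" "\<not> u!i" "v!i"
    unfolding lex_less_def by auto
  then have "delta u v = Suc i" by (intro delta_eq) auto
  then show ?thesis using i unfolding lvl_def by auto
qed

lemma lvl_iff: "lvl u v l \<longleftrightarrow> lex_less u v \<and> delta u v = l"
  using lvl_imp lex_imp by blast

lemma lvl_or: "length u = length v \<Longrightarrow> u \<noteq> v \<Longrightarrow> lvl u v (delta u v) \<or> lvl v u (delta u v)"
proof -
  assume a: "length u = length v" "u \<noteq> v"
  then obtain i where i: "i<length u" "take i u = take i v" "u!i \<noteq> v!i" using exists_diff by blast
  then have "delta u v = Suc i" using a by (intro delta_eq) auto
  then show ?thesis using a i unfolding lvl_def by (cases "u!i") auto
qed

lemma lvl_neq: "lvl u v l \<Longrightarrow> u \<noteq> v"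
  unfolding lvl_def by auto

lemma lvl_asym: "lvl u v l \<Longrightarrow> lvl v u l' \<Longrightarrow> False"
proof -
  assume a: "lvl u v l" "lvl v u l'"
  define i where "i = l - 1"
  define j where "j = l' - 1"
  have A: "take i u = take i v" "\<not> u!i" "v!i" "i < length u" "length u = length v"
    using a(1) unfolding lvl_def i_def by auto
  have B: "take j v = take j u" "\<not> v!j" "u!j" "j < length u"
    using a(2) unfolding lvl_def j_def by auto
  show False
  proof (cases i j rule: linorder_cases)
    case less
    have "v!i = u!i" using take_eq_nth[of j v u i] less A(4,5) B(1) by simp
    then show ?thesis using A(2,3) by simp
  next
    case equal then show ?thesis using A(2) B(3) by simp
  next
    case greater
    have "u!j = v!j" using take_eq_nth[of i u v j] greater B(4) A(5) A(1) by simp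
    then show ?thesis using B(2,3) by simp
  qed
qed

lemma lvl_unique: "lvl u v l \<Longrightarrow> lvl u v l' \<Longrightarrow> l = l'"
  using lvl_imp by blast

lemma lvl_drop:
  assumes "lvl u v l" "k < l" "take k u = take k v"
  shows "lvl (drop k u) (drop k v) (l - k)"
proof -
  have "take (l-k-1) (drop k u) = drop k (take (l-1) u)" "take (l-k-1) (drop k v) = drop k (take (l-1) v)"
    using assms(2) by (simp_all add: drop_take)
  then show ?thesis using assms unfolding lvl_def by (auto simp: Suc_diff_Suc)
qed

lemma card_cube: "card (cube n) = 2 ^ n"
proof -
  have "cube n = {xs. set xs \<subseteq> UNIV \<and> length xs = n}" unfolding cube_def by auto
  then show ?thesis using card_lists_length_eq[of "UNIV::bool set" n] by simp
qed

lemma finite_cube: "finite (cube n)"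
proof -
  have "cube n = {xs. set xs \<subseteq> UNIV \<and> length xs = n}" unfolding cube_def by auto
  then show ?thesis using finite_lists_length_eq[of "UNIV::bool set" n] by simp
qed




definition bw :: "nat \<Rightarrow> bool list set set \<Rightarrow> nat \<Rightarrow> bool list \<Rightarrow> bool list set" where
  "bw d E l v = {u \<in> cube d. {u,v} \<in> E \<and> lvl u v l}"

lemma graph_mem: "graph_on d E \<Longrightarrow> {u,v} \<in> E \<Longrightarrow> u \<in> cube d \<and> v \<in> cube d"
proof -
  assume g: "graph_on d E" and e: "{u,v} \<in> E"
  then obtain u' v' where "{u,v} = {u',v'}" "u' \<in> cube d" "v' \<in> cube d"
    unfolding graph_on_def by blast
  then show ?thesis by (metis doubleton_eq_iff)
qed

lemma finite_bw: "finite (bw d E l v)"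
  unfolding bw_def using finite_cube by simp

lemma level_edges_img:
  assumes g: "graph_on d E"
  shows "level_edges E l = (\<lambda>(v,u). {u,v}) ` Sigma (cube d) (bw d E l)"
proof
  show "level_edges E l \<subseteq> (\<lambda>(v,u). {u,v}) ` Sigma (cube d) (bw d E l)"
  proof
    fix e assume "e \<in> level_edges E l"
    then obtain u v where e: "e \<in> E" "e = {u,v}" "u \<noteq> v" "delta u v = l"
      unfolding level_edges_def by blast
    then have c: "u \<in> cube d" "v \<in> cube d" using graph_mem[OF g] by auto
    then have "length u = length v" unfolding cube_def by auto
    then have "lvl u v l \<or> lvl v u l" using lvl_or[of u v] e by auto
    then show "e \<in> (\<lambda>(v,u). {u,v}) ` Sigma (cube d) (bw d E l)"
    proof
      assume "lvl u v l"
      then have "(v,u) \<in> Sigma (cube d) (bw d E l)" using c e unfolding bw_def by auto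
      then show ?thesis using e by (auto intro!: image_eqI[where x="(v,u)"])
    next
      assume "lvl v u l"
      then have "(u,v) \<in> Sigma (cube d) (bw d E l)" using c e unfolding bw_def by (auto simp: insert_commute)
      then show ?thesis using e by (auto simp: insert_commute intro!: image_eqI[where x="(u,v)"])
    qed
  qed
next
  show "(\<lambda>(v,u). {u,v}) ` Sigma (cube d) (bw d E l) \<subseteq> level_edges E l"
  proof
    fix e assume "e \<in> (\<lambda>(v,u). {u,v}) ` Sigma (cube d) (bw d E l)"
    then obtain u v where "e = {u,v}" "{u,v} \<in> E" "lvl u v l" unfolding bw_def by auto
    then show "e \<in> level_edges E l" unfolding level_edges_def using lvl_imp[of u v l] lvl_neq[of u v l] by auto
  qed
qed

lemma inj_pairs: "inj_on (\<lambda>(v,u). {u,v}) (Sigma (cube d) (bw d E l))"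
proof (rule inj_onI, clarify)
  fix v u v' u'
  assume a: "u \<in> bw d E l v" "u' \<in> bw d E l v'" "{u,v} = {u',v'}"
  then have l: "lvl u v l" "lvl u' v' l" unfolding bw_def by auto
  show "v = v' \<and> u = u'"
  proof (cases "u = u'")
    case True then show ?thesis using a(3) doubleton_eq_iff[of u v u' v'] lvl_neq[OF l(1)] by auto
  next
    case False
    then have "u = v'" "v = u'" using a(3) doubleton_eq_iff[of u v u' v'] by simp_all
    then show ?thesis using l lvl_asym by blast
  qed
qed

lemma e_level_sum:
  assumes "graph_on d E"
  shows "e_level E l = (\<Sum>v\<in>cube d. card (bw d E l v))"
proof -
  have "e_level E l = card (Sigma (cube d) (bw d E l))"
    unfolding e_level_def level_edges_img[OF assms] using inj_pairs card_image by blast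
  also have "\<dots> = (\<Sum>v\<in>cube d. card (bw d E l v))"
    using finite_cube finite_bw by (simp add: card_SigmaI)
  finally show ?thesis .
qed

lemma e_level_ge:
  assumes "graph_on d E" "Q \<subseteq> Sigma (cube d) (bw d E l)"
  shows "card Q \<le> e_level E l"
proof -
  have "e_level E l = card (Sigma (cube d) (bw d E l))"
    unfolding e_level_def level_edges_img[OF assms(1)] using inj_pairs card_image by blast
  then show ?thesis using assms(2) card_mono finite_SigmaI finite_cube finite_bw by metis
qed

lemma bw_card_le:
  assumes "v \<in> cube d" "1 \<le> l" "l \<le> d"
  shows "card (bw d E l v) \<le> 2 ^ (d - l)"
proof -
  have tk: "take l u = take (l-1) v @ [False]" if "u \<in> bw d E l v" for u
  proof -
    have u: "length u = d" "take (l-1) u = take (l-1) v" "\<not> u!(l-1)"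
      using that unfolding bw_def lvl_def cube_def by auto
    have "take (Suc (l-1)) u = take (l-1) u @ [u!(l-1)]"
      using u assms by (intro take_Suc_conv_app_nth) auto
    then show ?thesis using u assms by simp
  qed
  have "inj_on (drop l) (bw d E l v)"
  proof (rule inj_onI)
    fix u u' assume "u \<in> bw d E l v" "u' \<in> bw d E l v" "drop l u = drop l u'"
    then show "u = u'" using tk by (metis append_take_drop_id)
  qed
  moreover have "drop l ` bw d E l v \<subseteq> cube (d - l)" unfolding bw_def cube_def by auto
  ultimately have "card (bw d E l v) \<le> card (cube (d - l))"
    using card_inj_on_le finite_cube by blast
  then show ?thesis using card_cube by simp
qed




lemma card_split: "finite A \<Longrightarrow> card {a\<in>A. P a} = card {a\<in>A. P a \<and> Q a} + card {a\<in>A. P a \<and> \<not> Q a}"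
proof -
  assume f: "finite A"
  have "{a\<in>A. P a} = {a\<in>A. P a \<and> Q a} \<union> {a\<in>A. P a \<and> \<not> Q a}" by auto
  moreover have "{a\<in>A. P a \<and> Q a} \<inter> {a\<in>A. P a \<and> \<not> Q a} = {}" by auto
  ultimately show ?thesis using f by (simp add: card_Un_disjoint)
qed

lemma card_as_sum: "finite A \<Longrightarrow> real (card {a\<in>A. P a}) = (\<Sum>a\<in>A. if P a then 1 else 0)"
  by (simp add: sum.inter_filter[symmetric])

lemma pairs_sum:
  fixes L :: "nat set"
  assumes "finite L"
  shows "(\<Sum>k\<in>L. real (card {l\<in>L. k < l})) = (real (card L)^2 - real (card L)) / 2"
proof -
  have A: "(\<Sum>k\<in>L. real (card {l\<in>L. k < l})) = (\<Sum>k\<in>L. \<Sum>l\<in>L. if k < l then 1 else 0)"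
    using assms by (simp add: card_as_sum)
  have B: "(\<Sum>k\<in>L. real (card {l\<in>L. l < k})) = (\<Sum>k\<in>L. \<Sum>l\<in>L. if l < k then 1 else 0)"
    using assms by (simp add: card_as_sum)
  have AB: "(\<Sum>k\<in>L. \<Sum>l\<in>L. (if l < k then 1 else 0)::real) = (\<Sum>l\<in>L. \<Sum>k\<in>L. if l < k then 1 else 0)"
    by (rule sum.swap)
  have each: "real (card {l\<in>L. k < l}) + real (card {l\<in>L. l < k}) = real (card L) - 1" if "k \<in> L" for k
  proof -
    have "L = {l\<in>L. k < l} \<union> {l\<in>L. l < k} \<union> {k}" using that by auto
    moreover have "card ({l\<in>L. k < l} \<union> {l\<in>L. l < k} \<union> {k}) = card {l\<in>L. k < l} + card {l\<in>L. l < k} + 1"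
    proof -
      have "card ({l\<in>L. k < l} \<union> {l\<in>L. l < k}) = card {l\<in>L. k < l} + card {l\<in>L. l < k}"
        using assms by (intro card_Un_disjoint) auto
      moreover have "card ({l\<in>L. k < l} \<union> {l\<in>L. l < k} \<union> {k}) = card ({l\<in>L. k < l} \<union> {l\<in>L. l < k}) + card {k}"
        using assms by (intro card_Un_disjoint) auto
      ultimately show ?thesis by simp
    qed
    ultimately have "card L = card {l\<in>L. k < l} + card {l\<in>L. l < k} + 1" by simp
    then show ?thesis by simp
  qed
  have "(\<Sum>k\<in>L. real (card {l\<in>L. k < l})) + (\<Sum>k\<in>L. real (card {l\<in>L. l < k})) = (\<Sum>k\<in>L. real (card L) - 1)"
    by (simp add: sum.distrib[symmetric] each)
  also have "\<dots> = real (card L) * (real (card L) - 1)" by simp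
  finally have S: "(\<Sum>k\<in>L. real (card {l\<in>L. k < l})) + (\<Sum>k\<in>L. real (card {l\<in>L. l < k})) = real (card L) * (real (card L) - 1)" .
  have "(\<Sum>k\<in>L. real (card {l\<in>L. l < k})) = (\<Sum>k\<in>L. real (card {l\<in>L. k < l}))"
    using A B AB by simp
  then show ?thesis using S by (simp add: power2_eq_square algebra_simps)
qed




locale setting =
  fixes d :: nat and E :: "bool list set set" and \<epsilon> :: real and R :: "nat set"
  assumes graph: "graph_on d E" and epos: "\<epsilon> > 0" and Rsub: "R \<subseteq> {1..d}"
    and Rrich: "\<forall>l\<in>R. rich_level \<epsilon> d E l" and big: "12 \<le> \<epsilon> * card R"
begin

definition f :: "nat \<Rightarrow> bool list \<Rightarrow> real" where
  "f l v = real (card (bw d E l v)) / 2 ^ (d - l)"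

definition L :: "bool list \<Rightarrow> nat set" where
  "L v = {l\<in>R. \<epsilon> / 4 \<le> f l v}"

definition good :: "bool list \<Rightarrow> nat \<Rightarrow> nat \<Rightarrow> bool" where
  "good x k l \<longleftrightarrow> \<epsilon>^3 / 400 * 2 ^ (d - k) \<le> real (card {v\<in>cube d. x \<in> bw d E k v \<and> l \<in> L v})"

lemma finR: "finite R" using Rsub finite_subset by blast

lemma L_sub: "L v \<subseteq> R" unfolding L_def by auto

lemma finL: "finite (L v)" using L_sub finR finite_subset by blast

lemma f_le1: "v \<in> cube d \<Longrightarrow> l \<in> R \<Longrightarrow> f l v \<le> 1"
proof -
  assume "v \<in> cube d" "l \<in> R"
  then have "card (bw d E l v) \<le> 2 ^ (d - l)" using bw_card_le Rsub by auto
  then have "real (card (bw d E l v)) \<le> 2 ^ (d - l)" by (metis of_nat_le_iff of_nat_numeral of_nat_power)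
  then show ?thesis unfolding f_def by simp
qed

lemma f_sum: "l \<in> R \<Longrightarrow> \<epsilon> * 2 ^ (d - 1) \<le> (\<Sum>v\<in>cube d. f l v)"
proof -
  assume l: "l \<in> R"
  then have l1: "1 \<le> l" "l \<le> d" using Rsub by auto
  have "\<epsilon> * tau l d \<le> real (e_level E l)" using Rrich l unfolding rich_level_def by auto
  also have "\<dots> = (\<Sum>v\<in>cube d. real (card (bw d E l v)))" using e_level_sum[OF graph] by simp
  finally have A: "\<epsilon> * tau l d \<le> (\<Sum>v\<in>cube d. real (card (bw d E l v)))" .
  have "tau l d = 2 ^ (d - l) * 2 ^ (d - 1)"
    unfolding tau_def using l1 by (simp add: power_add[symmetric])
  then have "\<epsilon> * 2 ^ (d - 1) \<le> (\<Sum>v\<in>cube d. real (card (bw d E l v))) / 2 ^ (d - l)"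
    using A by (simp add: field_simps)
  then show ?thesis unfolding f_def by (simp add: sum_divide_distrib)
qed

lemma sumL: "2 ^ d * \<epsilon> * card R / 4 \<le> (\<Sum>v\<in>cube d. real (card (L v)))"
proof -
  have pt: "f l v \<le> (if l \<in> L v then 1 else 0) + \<epsilon> / 4" if "v \<in> cube d" "l \<in> R" for v l
  proof (cases "l \<in> L v")
    case True then show ?thesis using f_le1[OF that] epos by simp
  next
    case False then have "f l v < \<epsilon> / 4" using that unfolding L_def by auto
    then show ?thesis using False by simp
  qed
  have cL: "real (card (L v)) = (\<Sum>l\<in>R. if l \<in> L v then 1 else 0)" for v
  proof -
    have "{l\<in>R. l \<in> L v} = L v" unfolding L_def by auto
    then show ?thesis using card_as_sum[OF finR, of "\<lambda>l. l \<in> L v"] by simp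
  qed
  have "(\<Sum>l\<in>R. \<epsilon> * 2 ^ (d - 1)) \<le> (\<Sum>l\<in>R. \<Sum>v\<in>cube d. f l v)"
    using f_sum by (rule sum_mono)
  also have "\<dots> = (\<Sum>v\<in>cube d. \<Sum>l\<in>R. f l v)" by (rule sum.swap)
  also have "\<dots> \<le> (\<Sum>v\<in>cube d. \<Sum>l\<in>R. (if l \<in> L v then 1 else 0) + \<epsilon> / 4)"
    using pt by (intro sum_mono) auto
  also have "\<dots> = (\<Sum>v\<in>cube d. real (card (L v)) + card R * \<epsilon> / 4)"
    by (simp add: sum.distrib cL)
  also have "\<dots> = (\<Sum>v\<in>cube d. real (card (L v))) + 2 ^ d * (card R * \<epsilon> / 4)"
    by (simp add: sum.distrib card_cube)
  finally have "card R * (\<epsilon> * 2 ^ (d - 1)) \<le> (\<Sum>v\<in>cube d. real (card (L v))) + 2 ^ d * (card R * \<epsilon> / 4)"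
    by simp
  moreover have "(2::real) ^ d = 2 * 2 ^ (d - 1)"
  proof (cases d)
    case 0 then show ?thesis using Rsub big epos by auto
  next
    case (Suc n) then show ?thesis by simp
  qed
  ultimately show ?thesis by (simp add: field_simps)
qed

lemma step1:
  assumes H: "\<forall>x\<in>bw d E k v. real (card {l\<in>L v. k < l \<and> good x k l}) \<le> \<epsilon> * card R / 24"
    and v: "v \<in> cube d" and k: "k \<in> L v"
  shows "real (card {l\<in>L v. k < l}) \<le> \<epsilon> * card R / 24
      + (4 / \<epsilon>) * ((\<Sum>x\<in>bw d E k v. real (card {l\<in>L v. k < l \<and> \<not> good x k l})) / 2 ^ (d - k))"
proof -
  define N where "N = real (card (bw d E k v))"
  define up where "up = real (card {l\<in>L v. k < l})"
  define bad where "bad x = real (card {l\<in>L v. k < l \<and> \<not> good x k l})" for x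
  define c where "c = \<epsilon> * card R / 24"
  have fk: "\<epsilon> / 4 \<le> N / 2 ^ (d - k)" using k unfolding L_def f_def N_def by auto
  then have Nge: "\<epsilon> / 4 * 2 ^ (d - k) \<le> N" by (simp add: field_simps)
  have "0 < \<epsilon> / 4 * 2 ^ (d - k)" using epos by simp
  then have Npos: "0 < N" using Nge by linarith
  have px: "up \<le> c + bad x" if "x \<in> bw d E k v" for x
  proof -
    have "card {l\<in>L v. k < l} = card {l\<in>L v. k < l \<and> good x k l} + card {l\<in>L v. k < l \<and> \<not> good x k l}"
      by (rule card_split[OF finL])
    then show ?thesis using H that unfolding up_def bad_def c_def by simp
  qed
  have "N * up = (\<Sum>x\<in>bw d E k v. up)" unfolding N_def by simp
  also have "\<dots> \<le> (\<Sum>x\<in>bw d E k v. c + bad x)" using px by (rule sum_mono)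
  also have "\<dots> = N * c + (\<Sum>x\<in>bw d E k v. bad x)" unfolding N_def by (simp add: sum.distrib)
  finally have "N * up \<le> N * c + (\<Sum>x\<in>bw d E k v. bad x)" .
  then have "up \<le> c + (\<Sum>x\<in>bw d E k v. bad x) / N" using Npos by (simp add: field_simps)
  moreover have "(\<Sum>x\<in>bw d E k v. bad x) / N \<le> (\<Sum>x\<in>bw d E k v. bad x) / (\<epsilon> / 4 * 2 ^ (d - k))"
    by (rule divide_left_mono) (use Nge epos Npos in \<open>auto simp: bad_def intro!: sum_nonneg mult_pos_pos\<close>)
  moreover have "(\<Sum>x\<in>bw d E k v. bad x) / (\<epsilon> / 4 * 2 ^ (d - k)) = (4 / \<epsilon>) * ((\<Sum>x\<in>bw d E k v. bad x) / 2 ^ (d - k))"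
    using epos by (simp add: divide_simps)
  ultimately show ?thesis unfolding up_def c_def bad_def by linarith
qed

lemma step3:
  "(\<Sum>v\<in>cube d. \<Sum>k\<in>L v. (\<Sum>x\<in>bw d E k v. real (card {l\<in>L v. k < l \<and> \<not> good x k l})) / 2 ^ (d - k))
     \<le> real (card R) * real (card R) * 2 ^ d * (\<epsilon>^3 / 400)"
proof -
  define h where "h v k x l = (if x \<in> bw d E k v \<and> l \<in> L v \<and> \<not> good x k l then 1 / 2 ^ (d - k) else (0::real))" for v k x l
  have hnn: "0 \<le> h v k x l" for v k x l unfolding h_def by auto
  have inner: "(\<Sum>x\<in>bw d E k v. real (card {l\<in>L v. k < l \<and> \<not> good x k l})) / 2 ^ (d - k)
      \<le> (\<Sum>x\<in>cube d. \<Sum>l\<in>R. h v k x l)" for v k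
  proof -
    have "(\<Sum>x\<in>bw d E k v. real (card {l\<in>L v. k < l \<and> \<not> good x k l})) / 2 ^ (d - k)
        = (\<Sum>x\<in>bw d E k v. real (card {l\<in>L v. k < l \<and> \<not> good x k l}) / 2 ^ (d - k))"
      by (simp add: sum_divide_distrib)
    also have "\<dots> \<le> (\<Sum>x\<in>bw d E k v. \<Sum>l\<in>R. h v k x l)"
    proof (rule sum_mono)
      fix x assume x: "x \<in> bw d E k v"
      have "{l\<in>L v. k < l \<and> \<not> good x k l} = {l\<in>R. l \<in> L v \<and> k < l \<and> \<not> good x k l}"
        using L_sub by auto
      then have "real (card {l\<in>L v. k < l \<and> \<not> good x k l}) = (\<Sum>l\<in>R. if l \<in> L v \<and> k < l \<and> \<not> good x k l then 1 else 0)"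
        using card_as_sum[OF finR] by simp
      also have "\<dots> \<le> (\<Sum>l\<in>R. if l \<in> L v \<and> \<not> good x k l then 1 else 0)"
        by (intro sum_mono) auto
      finally have "real (card {l\<in>L v. k < l \<and> \<not> good x k l}) / 2 ^ (d - k)
          \<le> (\<Sum>l\<in>R. if l \<in> L v \<and> \<not> good x k l then 1 else 0) / 2 ^ (d - k)"
        by (simp add: divide_right_mono)
      also have "\<dots> = (\<Sum>l\<in>R. h v k x l)"
        unfolding h_def sum_divide_distrib using x by (intro sum.cong) auto
      finally show "real (card {l\<in>L v. k < l \<and> \<not> good x k l}) / 2 ^ (d - k) \<le> (\<Sum>l\<in>R. h v k x l)" .
    qed
    also have "\<dots> \<le> (\<Sum>x\<in>cube d. \<Sum>l\<in>R. h v k x l)"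
      by (rule sum_mono2) (use finite_cube in \<open>auto simp: bw_def intro!: sum_nonneg hnn\<close>)
    finally show ?thesis .
  qed
  have "(\<Sum>v\<in>cube d. \<Sum>k\<in>L v. (\<Sum>x\<in>bw d E k v. real (card {l\<in>L v. k < l \<and> \<not> good x k l})) / 2 ^ (d - k))
      \<le> (\<Sum>v\<in>cube d. \<Sum>k\<in>L v. \<Sum>x\<in>cube d. \<Sum>l\<in>R. h v k x l)"
    by (intro sum_mono inner)
  also have "\<dots> \<le> (\<Sum>v\<in>cube d. \<Sum>k\<in>R. \<Sum>x\<in>cube d. \<Sum>l\<in>R. h v k x l)"
    by (intro sum_mono sum_mono2 finR L_sub sum_nonneg hnn)
  also have "\<dots> = (\<Sum>k\<in>R. \<Sum>v\<in>cube d. \<Sum>x\<in>cube d. \<Sum>l\<in>R. h v k x l)"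
    by (rule sum.swap)
  also have "\<dots> = (\<Sum>k\<in>R. \<Sum>x\<in>cube d. \<Sum>v\<in>cube d. \<Sum>l\<in>R. h v k x l)"
    by (intro sum.cong refl sum.swap)
  also have "\<dots> = (\<Sum>k\<in>R. \<Sum>x\<in>cube d. \<Sum>l\<in>R. \<Sum>v\<in>cube d. h v k x l)"
    by (intro sum.cong refl sum.swap)
  also have "\<dots> \<le> (\<Sum>k\<in>R. \<Sum>x\<in>cube d. \<Sum>l\<in>R. \<epsilon>^3 / 400)"
  proof (intro sum_mono)
    fix k x l
    show "(\<Sum>v\<in>cube d. h v k x l) \<le> \<epsilon>^3 / 400"
    proof (cases "good x k l")
      case True then show ?thesis unfolding h_def using epos by simp
    next
      case False
      have "(\<Sum>v\<in>cube d. h v k x l) = (\<Sum>v\<in>cube d. if x \<in> bw d E k v \<and> l \<in> L v then 1 / 2 ^ (d - k) else 0)"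
        unfolding h_def using False by simp
      also have "\<dots> = (\<Sum>v\<in>cube d. (if x \<in> bw d E k v \<and> l \<in> L v then 1 else 0) / 2 ^ (d - k))"
        by (intro sum.cong) auto
      also have "\<dots> = real (card {v\<in>cube d. x \<in> bw d E k v \<and> l \<in> L v}) / 2 ^ (d - k)"
        using card_as_sum[OF finite_cube, of d "\<lambda>v. x \<in> bw d E k v \<and> l \<in> L v"]
        by (simp add: sum_divide_distrib[symmetric])
      also have "\<dots> \<le> \<epsilon>^3 / 400"
        using False unfolding good_def by (simp add: field_simps)
      finally show ?thesis .
    qed
  qed
  also have "\<dots> = real (card R) * real (card R) * 2 ^ d * (\<epsilon>^3 / 400)"
    by (simp add: card_cube)
  finally show ?thesis .
qed

lemma exists_good:
  "\<exists>v\<in>cube d. \<exists>k\<in>L v. \<exists>x\<in>bw d E k v. \<epsilon> * card R / 24 < real (card {l\<in>L v. k < l \<and> good x k l})"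
proof (rule ccontr)
  assume "\<not> ?thesis"
  then have H: "\<forall>x\<in>bw d E k v. real (card {l\<in>L v. k < l \<and> good x k l}) \<le> \<epsilon> * card R / 24"
    if "v \<in> cube d" "k \<in> L v" for v k using that by (meson not_less)
  define c where "c = \<epsilon> * card R"
  define lam where "lam v = real (card (L v))" for v
  define B where "B v k = (\<Sum>x\<in>bw d E k v. real (card {l\<in>L v. k < l \<and> \<not> good x k l})) / 2 ^ (d - k)" for v k
  have c12: "12 \<le> c" using big unfolding c_def by simp
  have pv: "(lam v ^ 2 - lam v) / 2 \<le> lam v * (c / 24) + (4 / \<epsilon>) * (\<Sum>k\<in>L v. B v k)" if v: "v \<in> cube d" for v
  proof -
    have "(lam v ^ 2 - lam v) / 2 = (\<Sum>k\<in>L v. real (card {l\<in>L v. k < l}))"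
      unfolding lam_def using pairs_sum[OF finL] by simp
    also have "\<dots> \<le> (\<Sum>k\<in>L v. c / 24 + (4 / \<epsilon>) * B v k)"
      using step1[OF H[OF v] v] unfolding B_def c_def by (intro sum_mono) auto
    also have "\<dots> = lam v * (c / 24) + (4 / \<epsilon>) * (\<Sum>k\<in>L v. B v k)"
      unfolding lam_def by (simp add: sum.distrib sum_distrib_left)
    finally show ?thesis .
  qed
  have "(\<Sum>v\<in>cube d. (lam v ^ 2 - lam v) / 2) \<le> (\<Sum>v\<in>cube d. lam v * (c / 24) + (4 / \<epsilon>) * (\<Sum>k\<in>L v. B v k))"
    using pv by (rule sum_mono)
  also have "\<dots> = (\<Sum>v\<in>cube d. lam v) * (c / 24) + (4 / \<epsilon>) * (\<Sum>v\<in>cube d. \<Sum>k\<in>L v. B v k)"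
    by (simp add: sum.distrib sum_distrib_left sum_distrib_right)
  also have "\<dots> \<le> (\<Sum>v\<in>cube d. lam v) * (c / 24) + (4 / \<epsilon>) * (real (card R) * real (card R) * 2 ^ d * (\<epsilon>^3 / 400))"
    using step3 epos unfolding B_def by (intro add_left_mono mult_left_mono) auto
  also have "(4 / \<epsilon>) * (real (card R) * real (card R) * 2 ^ d * (\<epsilon>^3 / 400)) = 2 ^ d * c^2 / 100"
    unfolding c_def using epos by (simp add: field_simps power2_eq_square power3_eq_cube)
  finally have up: "(\<Sum>v\<in>cube d. (lam v ^ 2 - lam v) / 2) \<le> (\<Sum>v\<in>cube d. lam v) * (c / 24) + 2 ^ d * c^2 / 100" .
  have pt: "c * lam v / 6 - c^2 / 32 \<le> (lam v ^ 2 - lam v) / 2 - lam v * (c / 24)" for v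
  proof -
    have "(lam v ^ 2 - lam v) / 2 - lam v * (c / 24) - (c * lam v / 6 - c^2 / 32)
        = (lam v - c / 4)^2 / 2 + lam v * (c - 12) / 24"
      by (simp add: power2_eq_square field_simps)
    moreover have "0 \<le> lam v * (c - 12) / 24" unfolding lam_def using c12 by simp
    moreover have "0 \<le> (lam v - c / 4)^2 / 2" by simp
    ultimately show ?thesis by linarith
  qed
  have "(\<Sum>v\<in>cube d. c * lam v / 6 - c^2 / 32) \<le> (\<Sum>v\<in>cube d. (lam v ^ 2 - lam v) / 2 - lam v * (c / 24))"
    using pt by (intro sum_mono) auto
  also have "\<dots> = (\<Sum>v\<in>cube d. (lam v ^ 2 - lam v) / 2) - (\<Sum>v\<in>cube d. lam v) * (c / 24)"
    by (simp add: sum_subtractf sum_distrib_right)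
  finally have lo: "(c / 6) * (\<Sum>v\<in>cube d. lam v) - 2 ^ d * c^2 / 32
      \<le> (\<Sum>v\<in>cube d. (lam v ^ 2 - lam v) / 2) - (\<Sum>v\<in>cube d. lam v) * (c / 24)"
    by (simp add: sum_subtractf sum_distrib_left card_cube)
  have sl: "2 ^ d * c / 4 \<le> (\<Sum>v\<in>cube d. lam v)" using sumL unfolding c_def lam_def by simp
  have "(c / 6) * (2 ^ d * c / 4) \<le> (c / 6) * (\<Sum>v\<in>cube d. lam v)"
    using sl c12 by (intro mult_left_mono) auto
  then have "(c / 6) * (2 ^ d * c / 4) - 2 ^ d * c^2 / 32 \<le> 2 ^ d * c^2 / 100"
    using lo up by linarith
  then have "2 ^ d * c^2 / 96 \<le> 2 ^ d * c^2 / 100" by (simp add: power2_eq_square field_simps)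
  moreover have "0 < 2 ^ d * c^2" using c12 by simp
  ultimately show False by (simp add: mult.commute)
qed

end



lemma take_k_nth:
  assumes "lvl x v k"
  shows "take k v = take (k-1) x @ [True]"
proof -
  have a: "1 \<le> k" "k \<le> length v" "take (k-1) x = take (k-1) v" "v!(k-1)" using assms unfolding lvl_def by auto
  have "take (Suc (k-1)) v = take (k-1) v @ [v!(k-1)]" using a by (intro take_Suc_conv_app_nth) auto
  then show ?thesis using a by simp
qed

lemma lvl_take:
  assumes "lvl u v l" "k < l"
  shows "take k u = take k v"
proof -
  have "take (l-1) u = take (l-1) v" using assms unfolding lvl_def by auto
  then have "take k (take (l-1) u) = take k (take (l-1) v)" by simp
  moreover have "k \<le> l - 1" using assms(2) by simp
  ultimately show ?thesis by (simp add: min_absorb1)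
qed

context setting
begin

lemma final:
  assumes C: "C \<le> real (card R)"
  shows "\<exists>a p x G'. a < d \<and> length p = a \<and> x \<in> lhs d a p \<and>
            G' \<subseteq> E \<and> (\<forall>e\<in>G'. e \<subseteq> rhs d a p) \<and>
            rich (\<epsilon>^4/800) (\<epsilon> * C / 24) (d - a - 1) (shift_graph (a + 1) G') \<and>
            (\<forall>u v. {u, v} \<in> G' \<and> lex_less u v \<longrightarrow> v \<in> fwd_nbrs E x)"
proof -
  obtain v0 k x where v0: "v0 \<in> cube d" and k: "k \<in> L v0" and x: "x \<in> bw d E k v0"
    and cg: "\<epsilon> * card R / 24 < real (card {l\<in>L v0. k < l \<and> good x k l})"
    using exists_good by blast
  have "k \<in> R" using k L_sub by blast
  then have k1: "1 \<le> k" "k \<le> d" using Rsub by auto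
  define a where "a = k - 1"
  define p where "p = take a x"
  have xc: "x \<in> cube d" "{x, v0} \<in> E" "lvl x v0 k" using x unfolding bw_def by auto
  have lp: "length p = a" unfolding p_def a_def using xc k1 unfolding cube_def by auto
  define S where "S = {v\<in>cube d. x \<in> bw d E k v}"
  define G' where "G' = {{u,v} | u v. v \<in> S \<and> {u,v} \<in> E \<and> lex_less u v \<and> take k u = take k v}"
  have Stk: "take k v = p @ [True]" if "v \<in> S" for v
    using that take_k_nth unfolding S_def bw_def p_def a_def by auto
  have inrhs: "y \<in> rhs d a p" if "y \<in> cube d" "take k y = p @ [True]" for y
  proof -
    have "take a y = take a (take k y)" unfolding a_def by (simp add: min_def)
    also have "\<dots> = p" using that lp by simp
    finally have 1: "take a y = p" .
    have "y ! a = (take k y) ! a" unfolding a_def using k1 by simp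
    also have "\<dots> = True" using that lp by (simp add: nth_append)
    finally show ?thesis using 1 that unfolding rhs_def fund_interval_def by auto
  qed
  have G'E: "G' \<subseteq> E" unfolding G'_def by auto
  have G'rhs: "\<forall>e\<in>G'. e \<subseteq> rhs d a p"
  proof
    fix e assume "e \<in> G'"
    then obtain u v where e: "e = {u,v}" "v \<in> S" "{u,v} \<in> E" "take k u = take k v" unfolding G'_def by auto
    have "u \<in> cube d" "v \<in> cube d" using graph_mem[OF graph e(3)] by auto
    then show "e \<subseteq> rhs d a p" using e Stk inrhs by auto
  qed
  have xl: "x \<in> lhs d a p"
    using xc unfolding lhs_def fund_interval_def p_def a_def lvl_def by auto
  have ad: "a < d" unfolding a_def using k1 by auto
  have fwd: "\<forall>u v. {u, v} \<in> G' \<and> lex_less u v \<longrightarrow> v \<in> fwd_nbrs E x"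
  proof (intro allI impI)
    fix u' v' assume "{u', v'} \<in> G' \<and> lex_less u' v'"
    then have "\<exists>u v. {u',v'} = {u,v} \<and> v \<in> S \<and> lex_less u v" unfolding G'_def mem_Collect_eq by blast
    then obtain u v where e: "{u',v'} = {u,v}" "v \<in> S" "lex_less u v" by blast
    have e4: "lex_less u' v'" using \<open>{u', v'} \<in> G' \<and> lex_less u' v'\<close> by simp
    have "v' = v"
    proof (rule ccontr)
      assume "v' \<noteq> v"
      then have "u' = v" "v' = u" using e(1) doubleton_eq_iff[of u' v' u v] by auto
      then have "lex_less v u" using e4 by simp
      then show False using lvl_asym[OF lex_imp[OF e(3)] lex_imp[of v u]] by blast
    qed
    moreover have "{x, v} \<in> E" "lvl x v k" using e(2) unfolding S_def bw_def by auto
    ultimately show "v' \<in> fwd_nbrs E x" using lvl_imp[of x v k] unfolding fwd_nbrs_def by auto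
  qed
  define G'' where "G'' = shift_graph k G'"
  have gG: "graph_on (d - k) G''"
    unfolding graph_on_def G''_def shift_graph_def
  proof
    fix e' assume "e' \<in> (\<lambda>e. drop k ` e) ` G'"
    then obtain u v where e: "e' = drop k ` {u,v}" "v \<in> S" "{u,v} \<in> E" "lex_less u v" "take k u = take k v"
      unfolding G'_def by auto
    have c: "u \<in> cube d" "v \<in> cube d" using graph_mem[OF graph e(3)] by auto
    have "u \<noteq> v" using e(4) lex_imp lvl_neq by blast
    then have "drop k u \<noteq> drop k v" using e(5) by (metis append_take_drop_id)
    then show "\<exists>u v. e' = {u, v} \<and> u \<noteq> v \<and> u \<in> cube (d - k) \<and> v \<in> cube (d - k)"
      using e(1) c \<open>drop k u \<noteq> drop k v\<close>
      by (intro exI[of _ "drop k u"] exI[of _ "drop k v"]) (auto simp: cube_def)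
  qed
  define GOOD where "GOOD = {l\<in>L v0. k < l \<and> good x k l}"
  have richl: "rich_level (\<epsilon>^4/800) (d - k) G'' (l - k)" if l: "l \<in> GOOD" for l
  proof -
    have lR: "l \<in> R" using l L_sub unfolding GOOD_def by blast
    have l1: "k < l" "l \<le> d" "l \<in> R" "good x k l" using l lR Rsub unfolding GOOD_def by auto
    define Sl where "Sl = {v\<in>cube d. x \<in> bw d E k v \<and> l \<in> L v}"
    define Q where "Q = (\<lambda>(v,u). (drop k v, drop k u)) ` Sigma Sl (bw d E l)"
    have Sl_S: "v \<in> S" if "v \<in> Sl" for v using that unfolding Sl_def S_def by auto
    have utk: "take k u = take k v" if "u \<in> bw d E l v" for u v
      using that lvl_take l1(1) unfolding bw_def by auto
    have inj: "inj_on (\<lambda>(v,u). (drop k v, drop k u)) (Sigma Sl (bw d E l))"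
    proof (rule inj_onI, clarify)
      fix v u v' u' assume a: "v \<in> Sl" "u \<in> bw d E l v" "v' \<in> Sl" "u' \<in> bw d E l v'"
        "drop k v = drop k v'" "drop k u = drop k u'"
      have "take k v = take k v'" using Stk Sl_S a by auto
      then have "v = v'" using a(5) by (metis append_take_drop_id)
      moreover have "take k u = take k u'" using utk a \<open>take k v = take k v'\<close> by metis
      then have "u = u'" using a(6) by (metis append_take_drop_id)
      ultimately show "v = v' \<and> u = u'" by simp
    qed
    have QS: "Q \<subseteq> Sigma (cube (d - k)) (bw (d - k) G'' (l - k))"
    proof
      fix q assume "q \<in> Q"
      then obtain v u where q: "q = (drop k v, drop k u)" "v \<in> Sl" "u \<in> bw d E l v" unfolding Q_def by auto
      have u: "u \<in> cube d" "{u,v} \<in> E" "lvl u v l" using q unfolding bw_def by auto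
      have vc: "v \<in> cube d" using q unfolding Sl_def by auto
      have tk: "take k u = take k v" using utk q by auto
      have "{u,v} \<in> G'" unfolding G'_def using Sl_S q u tk lvl_imp by blast
      then have "drop k ` {u,v} \<in> G''" unfolding G''_def shift_graph_def by blast
      then have "{drop k u, drop k v} \<in> G''" by simp
      moreover have "lvl (drop k u) (drop k v) (l - k)" using lvl_drop u(3) l1(1) tk by blast
      ultimately show "q \<in> Sigma (cube (d - k)) (bw (d - k) G'' (l - k))"
        using q u vc unfolding bw_def cube_def by auto
    qed
    have "card Q = card (Sigma Sl (bw d E l))" unfolding Q_def using inj card_image by blast
    also have "\<dots> = (\<Sum>v\<in>Sl. card (bw d E l v))"
      using finite_cube finite_bw by (simp add: Sl_def)
    finally have cQ: "real (card Q) = (\<Sum>v\<in>Sl. real (card (bw d E l v)))" by simp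
    have "(\<Sum>v\<in>Sl. \<epsilon> / 4 * 2 ^ (d - l)) \<le> (\<Sum>v\<in>Sl. real (card (bw d E l v)))"
    proof (rule sum_mono)
      fix v assume "v \<in> Sl"
      then have "\<epsilon> / 4 \<le> f l v" unfolding Sl_def L_def by auto
      then show "\<epsilon> / 4 * 2 ^ (d - l) \<le> real (card (bw d E l v))" unfolding f_def by (simp add: field_simps)
    qed
    then have "real (card Sl) * (\<epsilon> / 4 * 2 ^ (d - l)) \<le> real (card Q)" using cQ by simp
    moreover have "\<epsilon>^3 / 400 * 2 ^ (d - k) \<le> real (card Sl)" using l1(4) unfolding good_def Sl_def by simp
    moreover have "\<epsilon>^3 / 400 * 2 ^ (d - k) * (\<epsilon> / 4 * 2 ^ (d - l)) \<le> real (card Sl) * (\<epsilon> / 4 * 2 ^ (d - l))"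
      by (rule mult_right_mono) (use calculation epos in auto)
    ultimately have X: "\<epsilon>^3 / 400 * 2 ^ (d - k) * (\<epsilon> / 4 * 2 ^ (d - l)) \<le> real (card Q)"
      by linarith
    have Y: "real (card Q) \<le> real (e_level G'' (l - k))" using e_level_ge[OF gG QS] by simp
    have "(d - k) + (d - l) = Suc (2 * (d - k) - (l - k) - 1)" using l1 by auto
    then have Z: "(2::real) ^ (d - k) * 2 ^ (d - l) = 2 * 2 ^ (2 * (d - k) - (l - k) - 1)"
      by (metis power_add power_Suc)
    have "\<epsilon>^3 / 400 * 2 ^ (d - k) * (\<epsilon> / 4 * 2 ^ (d - l)) = \<epsilon>^4 / 1600 * ((2::real) ^ (d - k) * 2 ^ (d - l))"
      by (simp add: field_simps eval_nat_numeral)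
    also have "\<dots> = \<epsilon>^4 / 800 * 2 ^ (2 * (d - k) - (l - k) - 1)" using Z by simp
    finally have "\<epsilon>^4 / 800 * 2 ^ (2 * (d - k) - (l - k) - 1) \<le> real (e_level G'' (l - k))"
      using X Y by linarith
    then show ?thesis unfolding rich_level_def tau_def by simp
  qed
  have "(\<lambda>l. l - k) ` GOOD \<subseteq> {l' \<in> {1..d - k}. rich_level (\<epsilon>^4/800) (d - k) G'' l'}"
  proof
    fix l' assume "l' \<in> (\<lambda>l. l - k) ` GOOD"
    then obtain l where l: "l \<in> GOOD" "l' = l - k" by blast
    then have "l \<in> R" "k < l" using L_sub unfolding GOOD_def by auto
    then have "l \<le> d" using Rsub by auto
    then show "l' \<in> {l' \<in> {1..d - k}. rich_level (\<epsilon>^4/800) (d - k) G'' l'}"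
      using l richl \<open>k < l\<close> by auto
  qed
  moreover have "inj_on (\<lambda>l. l - k) GOOD" unfolding GOOD_def by (rule inj_onI) auto
  ultimately have "card GOOD \<le> card {l' \<in> {1..d - k}. rich_level (\<epsilon>^4/800) (d - k) G'' l'}"
    using card_image card_mono[of "{l' \<in> {1..d - k}. rich_level (\<epsilon>^4/800) (d - k) G'' l'}" "(\<lambda>l. l - k) ` GOOD"]
    by fastforce
  then have c1: "real (card GOOD) \<le> real (card {l' \<in> {1..d - k}. rich_level (\<epsilon>^4/800) (d - k) G'' l'})"
    by simp
  have c2: "\<epsilon> * C / 24 \<le> \<epsilon> * card R / 24" using C epos by simp
  have rr: "rich (\<epsilon>^4/800) (\<epsilon> * C / 24) (d - k) G''"
  proof -
    have "\<epsilon> * card R / 24 < real (card GOOD)" using cg unfolding GOOD_def .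
    then show ?thesis unfolding rich_def using c1 c2 by linarith
  qed
  have "d - a - 1 = d - k" "a + 1 = k" unfolding a_def using k1 by auto
  then have "rich (\<epsilon>^4/800) (\<epsilon> * C / 24) (d - a - 1) (shift_graph (a + 1) G')"
    using rr unfolding G''_def by simp
  then show ?thesis using ad lp xl G'E G'rhs fwd
    by (intro exI[of _ a] exI[of _ p] exI[of _ x] exI[of _ G']) simp
qed

end



theorem lemma4p3:
  shows "\<forall>\<epsilon>::real. \<epsilon> > 0 \<longrightarrow> (\<exists>\<eta>::real. \<eta> > 0 \<and>
     (\<forall>C::real. C \<ge> 12 / \<epsilon> \<longrightarrow>
       (\<forall>(d::nat) (E::bool list set set). graph_on d E \<and> rich \<epsilon> C d E \<longrightarrow>
         (\<exists>a p x G'. a < d \<and> length p = a \<and> x \<in> lhs d a p \<and>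
            G' \<subseteq> E \<and> (\<forall>e\<in>G'. e \<subseteq> rhs d a p) \<and>
            rich \<eta> (\<epsilon> * C / 24) (d - a - 1) (shift_graph (a + 1) G') \<and>
            (\<forall>u v. {u, v} \<in> G' \<and> lex_less u v \<longrightarrow> v \<in> fwd_nbrs E x)))))"
proof (intro allI impI)
  fix \<epsilon> :: real assume ep: "\<epsilon> > 0"
  show "\<exists>\<eta>::real. \<eta> > 0 \<and>
     (\<forall>C::real. C \<ge> 12 / \<epsilon> \<longrightarrow>
       (\<forall>(d::nat) (E::bool list set set). graph_on d E \<and> rich \<epsilon> C d E \<longrightarrow>
         (\<exists>a p x G'. a < d \<and> length p = a \<and> x \<in> lhs d a p \<and>
            G' \<subseteq> E \<and> (\<forall>e\<in>G'. e \<subseteq> rhs d a p) \<and>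
            rich \<eta> (\<epsilon> * C / 24) (d - a - 1) (shift_graph (a + 1) G') \<and>
            (\<forall>u v. {u, v} \<in> G' \<and> lex_less u v \<longrightarrow> v \<in> fwd_nbrs E x))))"
  proof (intro exI[of _ "\<epsilon>^4/800"] conjI allI impI)
    show "0 < \<epsilon>^4/800" using ep by simp
    fix C :: real and d :: nat and E :: "bool list set set"
    assume C: "12 / \<epsilon> \<le> C" and gr: "graph_on d E \<and> rich \<epsilon> C d E"
    define R where "R = {l\<in>{1..d}. rich_level \<epsilon> d E l}"
    have CR: "C \<le> real (card R)" using gr unfolding rich_def R_def by simp
    have "12 \<le> \<epsilon> * C" using C ep by (simp add: field_simps)
    also have "\<dots> \<le> \<epsilon> * card R" using CR ep by simp
    finally have big: "12 \<le> \<epsilon> * card R" .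
    interpret setting d E \<epsilon> R
      using gr ep big unfolding R_def by unfold_locales auto
    show "\<exists>a p x G'. a < d \<and> length p = a \<and> x \<in> lhs d a p \<and>
            G' \<subseteq> E \<and> (\<forall>e\<in>G'. e \<subseteq> rhs d a p) \<and>
            rich (\<epsilon>^4/800) (\<epsilon> * C / 24) (d - a - 1) (shift_graph (a + 1) G') \<and>
            (\<forall>u v. {u, v} \<in> G' \<and> lex_less u v \<longrightarrow> v \<in> fwd_nbrs E x)"
      by (rule final[OF CR])
  qed
qed


end
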